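(* Let $L$ be a regular locale without isolated points, and let $a,b\in L$ with $a^*=0$ and $b\ne0$. Then there exist $c,d\in L$ with $0\ne c\le b$, $0\ne d\le b$, $c\wedge d=0$, and $a\vee c^*=1=a\vee d^*$.
   Context: A frame (locale) $L$ is a complete lattice in which finite meets distribute over arbitrary joins; $x\to y$ is the Heyting implication and $x^*=x\to0$ the pseudocomplement. $L$ is regular if $x=\bigvee\{y\in L\mid y\prec x\}$ for every $x$, where $y\prec x$ means $y^*\vee x=1$. A sublocale of $L$ is a subset closed under arbitrary meets such that $x\to s$ lies in it whenever $s$ does; the open sublocale of $x$ is $\mathfrak{o}(x)=\{x\to y\mid y\in L\}$. A point of $L$ is $p\ne1$ such that $x\wedge y\le p$ implies $x\le p$ or $y\le p$; it is isolated if the sublocale $\{1,p\}$ equals $\mathfrak{o}(x)$ for some $x\in L$. *)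

theory Defs
  imports Main
begin

definition frame :: "'a::complete_lattice itself \<Rightarrow> bool" where
  "frame _ \<longleftrightarrow> (\<forall>(x::'a) A. inf x (Sup A) = Sup ((\<lambda>y. inf x y) ` A))"

definition frm_imp :: "'a::complete_lattice \<Rightarrow> 'a \<Rightarrow> 'a" where
  "frm_imp x y = Sup {z. inf z x \<le> y}"

definition pc :: "'a::complete_lattice \<Rightarrow> 'a" where
  "pc x = frm_imp x bot"

definition rather_below :: "'a::complete_lattice \<Rightarrow> 'a \<Rightarrow> bool" where
  "rather_below y x \<longleftrightarrow> sup (pc y) x = top"

definition regular_frame :: "'a::complete_lattice itself \<Rightarrow> bool" where
  "regular_frame _ \<longleftrightarrow> (\<forall>x::'a. x = Sup {y. rather_below y x})"

definition sublocale_of :: "'a::complete_lattice set \<Rightarrow> bool" where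
  "sublocale_of S \<longleftrightarrow> (\<forall>A. A \<subseteq> S \<longrightarrow> Inf A \<in> S) \<and> (\<forall>x s. s \<in> S \<longrightarrow> frm_imp x s \<in> S)"

definition open_sublocale :: "'a::complete_lattice \<Rightarrow> 'a set" where
  "open_sublocale x = {frm_imp x y | y. True}"

definition is_point :: "'a::complete_lattice \<Rightarrow> bool" where
  "is_point p \<longleftrightarrow> p \<noteq> top \<and> (\<forall>x y. inf x y \<le> p \<longrightarrow> x \<le> p \<or> y \<le> p)"

definition isolated_point :: "'a::complete_lattice \<Rightarrow> bool" where
  "isolated_point p \<longleftrightarrow> is_point p \<and> (\<exists>x. {top, p} = open_sublocale x)"

end

theory Submission
  imports Defs
begin

lemma imp_ge:
  fixes x y z :: "'a::complete_lattice"
  shows "inf z x \<le> y \<Longrightarrow> z \<le> frm_imp x y"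
  unfolding frm_imp_def by (rule Sup_upper) simp

lemma imp_mp:
  fixes x y :: "'a::complete_lattice"
  assumes "frame TYPE('a)"
  shows "inf (frm_imp x y) x \<le> y"
proof -
  have "inf x (frm_imp x y) = Sup ((\<lambda>z. inf x z) ` {z. inf z x \<le> y})"
    using assms unfolding frame_def frm_imp_def by blast
  also have "\<dots> \<le> y" by (rule Sup_least) (auto simp: inf_commute)
  finally show ?thesis by (simp add: inf_commute)
qed

lemma pc_iff:
  fixes x z :: "'a::complete_lattice"
  assumes "frame TYPE('a)"
  shows "z \<le> pc x \<longleftrightarrow> inf z x = bot"
proof
  assume "z \<le> pc x"
  then have "inf z x \<le> inf (pc x) x" by (rule inf_mono) simp
  also have "\<dots> \<le> bot" unfolding pc_def by (rule imp_mp[OF assms])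
  finally show "inf z x = bot" by (rule bot_unique[THEN iffD1])
next
  assume "inf z x = bot" then show "z \<le> pc x" unfolding pc_def by (intro imp_ge) simp
qed

lemma split_lemma:
  fixes y :: "'a::complete_lattice"
  assumes fr: "frame TYPE('a)"
    and reg: "regular_frame TYPE('a)"
    and noiso: "\<forall>p::'a. \<not> isolated_point p"
    and y: "y \<noteq> bot"
  shows "\<exists>c d. c \<noteq> bot \<and> c \<le> y \<and> d \<noteq> bot \<and> d \<le> y \<and> inf c d = bot"
proof (rule ccontr)
  assume H: "\<not> ?thesis"
  define p where "p = pc y"
  have ptop: "p \<noteq> top"
  proof
    assume "p = top"
    then have "inf top y = bot" using pc_iff[OF fr, of top y] p_def by simp
    then show False using y by simp
  qed
  have prime: "\<forall>x z. inf x z \<le> p \<longrightarrow> x \<le> p \<or> z \<le> p"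
  proof (intro allI impI)
    fix x z assume "inf x z \<le> p"
    then have "inf (inf x z) y = bot" using pc_iff[OF fr] p_def by blast
    then have "inf (inf x y) (inf z y) = bot" by (simp add: inf_aci)
    then have "inf x y = bot \<or> inf z y = bot" using H inf_le2[of x y] inf_le2[of z y] by blast
    then show "x \<le> p \<or> z \<le> p" using pc_iff[OF fr] p_def by blast
  qed
  have vals: "frm_imp y z \<in> {top, p}" for z
  proof -
    define w where "w = frm_imp y z"
    have pw: "p \<le> w" unfolding w_def p_def
      by (rule imp_ge) (metis fr inf_commute order_refl pc_iff bot.extremum)
    show ?thesis
    proof (cases "w \<le> p")
      case True then show ?thesis using pw w_def by auto
    next
      case False
      have "w = Sup {r. rather_below r w}" using reg unfolding regular_frame_def by blast
      then obtain r where r: "rather_below r w" "\<not> r \<le> p"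
        using False by (metis (mono_tags, lifting) Sup_least mem_Collect_eq)
      have "inf r (pc r) \<le> p" using pc_iff[OF fr, of "pc r" r] by (simp add: inf_commute)
      then have "pc r \<le> p" using prime r(2) by blast
      then have "top \<le> w" using r(1) pw unfolding rather_below_def
        by (metis le_sup_iff order_trans order_refl)
      then show ?thesis using w_def by (simp add: top_le)
    qed
  qed
  have "{top, p} = open_sublocale y"
  proof
    show "open_sublocale y \<subseteq> {top, p}" unfolding open_sublocale_def using vals by auto
    have "top \<le> frm_imp y y" by (rule imp_ge) simp
    then have "top = frm_imp y y" using top_le by metis
    moreover have "p = frm_imp y bot" unfolding p_def pc_def ..
    ultimately show "{top, p} \<subseteq> open_sublocale y" unfolding open_sublocale_def by auto
  qed
  then have "isolated_point p" unfolding isolated_point_def is_point_def using ptop prime by blast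
  then show False using noiso by blast
qed

theorem lemma5p1:
  fixes a b :: "'a::complete_lattice"
  assumes "frame TYPE('a)"
    and "regular_frame TYPE('a)"
    and "\<forall>p::'a. \<not> isolated_point p"
    and "pc a = bot"
    and "b \<noteq> bot"
  shows "\<exists>c d. c \<noteq> bot \<and> c \<le> b \<and> d \<noteq> bot \<and> d \<le> b \<and> inf c d = bot
              \<and> sup a (pc c) = top \<and> sup a (pc d) = top"
proof -
  note fr = assms(1)
  have ab: "inf a b \<noteq> bot"
  proof
    assume "inf a b = bot"
    then have "b \<le> pc a" using pc_iff[OF fr] by (simp add: inf_commute)
    then show False using assms(4,5) by (simp add: bot_unique)
  qed
  have "inf a b = Sup {r. rather_below r (inf a b)}"
    using assms(2) unfolding regular_frame_def by blast
  then obtain y where y: "rather_below y (inf a b)" "y \<noteq> bot"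
    using ab by (metis (mono_tags, lifting) Sup_least mem_Collect_eq bot_unique)
  have yab: "y \<le> inf a b"
  proof -
    have "inf y (sup (pc y) (inf a b)) = y" using y(1) unfolding rather_below_def by simp
    moreover have "inf y (sup (pc y) (inf a b)) = Sup ((\<lambda>z. inf y z) ` {pc y, inf a b})"
      using fr unfolding frame_def by (metis Sup_insert Sup_empty sup_bot_right)
    moreover have "inf y (pc y) = bot" using pc_iff[OF fr, of "pc y" y] by (simp add: inf_commute)
    ultimately have "y = inf y (inf a b)" by simp
    then show ?thesis by (metis inf.absorb_iff1)
  qed
  have ya: "sup a (pc y) = top"
  proof -
    have "sup (pc y) (inf a b) \<le> sup a (pc y)" by (simp add: le_supI2 le_infI1)
    then show ?thesis using y(1) unfolding rather_below_def by (simp add: top_le)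
  qed
  obtain c d where cd: "c \<noteq> bot" "c \<le> y" "d \<noteq> bot" "d \<le> y" "inf c d = bot"
    using split_lemma[OF assms(1-3) y(2)] by blast
  have anti: "z \<le> y \<Longrightarrow> pc y \<le> pc z" for z
    using pc_iff[OF fr] by (metis inf_commute inf_mono order_refl bot_unique)
  have "sup a (pc c) = top" using ya anti[OF cd(2)] by (metis sup_mono order_refl top_unique)
  moreover have "sup a (pc d) = top" using ya anti[OF cd(4)] by (metis sup_mono order_refl top_unique)
  ultimately show ?thesis using cd yab by (meson le_inf_iff order_trans)
qed

end
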